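(* Let $n_0,\dots,n_g\ge1$ and let $K\subseteq\mathbb Z^{g+1}$ be the subgroup generated by $(1,1,\dots,1)$ and the vectors $n_0e_0-n_\alpha e_\alpha$ for $\alpha=1,\dots,g$ (where $e_\alpha$ is the $\alpha$-th standard basis vector, indices from $0$). Then there is a group isomorphism $\mathbb Z^{g+1}/K\cong\mathrm{Jac}(B_{n_0,\dots,n_g})$ sending the coset of $(a_0,\dots,a_g)$ to the class of $\sum_{\alpha=0}^g a_\alpha(v_{\alpha,1}-v_{0,0})$; in particular, when $0\le a_\alpha\le n_\alpha$ for all $\alpha$, the coset of $(a_0,\dots,a_g)$ corresponds to the class of $\sum_{\alpha=0}^g(v_{\alpha,a_\alpha}-v_{0,0})$.
   Context: A graph is a finite, connected, loopless multigraph (parallel edges allowed). A divisor is an element of the free abelian group on $V(G)$; linear equivalence is generated by chip-firing (firing $w$ subtracts $\mathrm{val}(w)$ chips from $w$ and adds to each other vertex the number of edges joining it to $w$). $\mathrm{Jac}(G)$ is the group of linear equivalence classes of degree-$0$ divisors. For positive integers $n_0,\dots,n_g$, the banana graph $B_{n_0,\dots,n_g}$ is obtained by joining two vertices by $g+1$ internally disjoint paths of lengths $n_0,\dots,n_g$; it has genus $g$. Its vertices are labelled $v_{\alpha,i}$ ($0\le\alpha\le g$, $0\le i\le n_\alpha$), with $v_{\alpha,i}$ the vertex at distance $i$ from $v_{0,0}$ along the $\alpha$-th path; $v_{\alpha,0}=v_{0,0}$ and $v_{\alpha,n_\alpha}=v_{0,n_0}$ for all $\alpha$, other labels unique. *)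

theory Defs
  imports "HOL-Algebra.Algebra"
begin

text \<open>Vertices are encoded as pairs (alpha, i) of naturals. The canonical label of
  v_{alpha,i}: v_{alpha,0} = v_{0,0} and v_{alpha,n_alpha} = v_{0,n_0}.\<close>
definition bvert :: "(nat \<Rightarrow> nat) \<Rightarrow> nat \<Rightarrow> nat \<Rightarrow> nat \<times> nat" where
  "bvert n \<alpha> i = (if i = 0 then (0, 0) else if i = n \<alpha> then (0, n 0) else (\<alpha>, i))"

definition bverts :: "nat \<Rightarrow> (nat \<Rightarrow> nat) \<Rightarrow> (nat \<times> nat) set" where
  "bverts g n = {bvert n \<alpha> i | \<alpha> i. \<alpha> \<le> g \<and> i \<le> n \<alpha>}"

text \<open>Edges: for each path alpha and each 0 <= i < n_alpha there is one edge
  joining v_{alpha,i} and v_{alpha,i+1}. bmult u w = number of edges joining u and w.\<close>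
definition bedges :: "nat \<Rightarrow> (nat \<Rightarrow> nat) \<Rightarrow> (nat \<times> nat) set" where
  "bedges g n = {(\<alpha>, i). \<alpha> \<le> g \<and> i < n \<alpha>}"

definition bmult :: "nat \<Rightarrow> (nat \<Rightarrow> nat) \<Rightarrow> nat \<times> nat \<Rightarrow> nat \<times> nat \<Rightarrow> nat" where
  "bmult g n u w = card {e \<in> bedges g n.
      (bvert n (fst e) (snd e), bvert n (fst e) (Suc (snd e))) = (u, w) \<or>
      (bvert n (fst e) (snd e), bvert n (fst e) (Suc (snd e))) = (w, u)}"

definition bval :: "nat \<Rightarrow> (nat \<Rightarrow> nat) \<Rightarrow> nat \<times> nat \<Rightarrow> nat" where
  "bval g n w = (\<Sum>u \<in> bverts g n - {w}. bmult g n u w)"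

definition fire_delta :: "nat \<Rightarrow> (nat \<Rightarrow> nat) \<Rightarrow> nat \<times> nat \<Rightarrow> nat \<times> nat \<Rightarrow> int" where
  "fire_delta g n w u = (if u = w then - int (bval g n w) else int (bmult g n u w))"

definition indic :: "'a \<Rightarrow> 'a \<Rightarrow> int" where
  "indic v u = (if u = v then 1 else 0)"

definition Div0 :: "nat \<Rightarrow> (nat \<Rightarrow> nat) \<Rightarrow> ((nat \<times> nat) \<Rightarrow> int) monoid" where
  "Div0 g n = \<lparr> carrier = {D. (\<forall>u. u \<notin> bverts g n \<longrightarrow> D u = 0) \<and> (\<Sum>u \<in> bverts g n. D u) = 0},
               monoid.mult = (\<lambda>D E u. D u + E u), one = (\<lambda>u. 0) \<rparr>"

text \<open>Principal divisors: integer combinations of firing moves (linear equivalence is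
  generated by chip-firing).\<close>
definition Prin :: "nat \<Rightarrow> (nat \<Rightarrow> nat) \<Rightarrow> ((nat \<times> nat) \<Rightarrow> int) set" where
  "Prin g n = {(\<lambda>u. \<Sum>w \<in> bverts g n. c w * fire_delta g n w u) | c. True}"

definition Jac :: "nat \<Rightarrow> (nat \<Rightarrow> nat) \<Rightarrow> ((nat \<times> nat) \<Rightarrow> int) set monoid" where
  "Jac g n = Div0 g n Mod Prin g n"

definition Zg :: "nat \<Rightarrow> (nat \<Rightarrow> int) monoid" where
  "Zg g = \<lparr> carrier = {a. \<forall>i. g < i \<longrightarrow> a i = 0},
            monoid.mult = (\<lambda>a b i. a i + b i), one = (\<lambda>i. 0) \<rparr>"

definition Kgen :: "nat \<Rightarrow> (nat \<Rightarrow> nat) \<Rightarrow> (nat \<Rightarrow> int) set" where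
  "Kgen g n = {(\<lambda>i. if i \<le> g then 1 else 0)} \<union>
     {(\<lambda>i. int (n 0) * indic 0 i - int (n \<alpha>) * indic \<alpha> i) | \<alpha>. 1 \<le> \<alpha> \<and> \<alpha> \<le> g}"

definition Ksub :: "nat \<Rightarrow> (nat \<Rightarrow> nat) \<Rightarrow> (nat \<Rightarrow> int) set" where
  "Ksub g n = generate (Zg g) (Kgen g n)"

end

theory Submission
  imports Defs
begin

definition src :: "(nat \<Rightarrow> nat) \<Rightarrow> nat \<times> nat \<Rightarrow> nat \<times> nat" where
  "src n e = bvert n (fst e) (snd e)"
definition tgt :: "(nat \<Rightarrow> nat) \<Rightarrow> nat \<times> nat \<Rightarrow> nat \<times> nat" where
  "tgt n e = bvert n (fst e) (Suc (snd e))"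
definition pr :: "nat \<Rightarrow> (nat\<Rightarrow>nat) \<Rightarrow> (nat\<times>nat \<Rightarrow> int) \<Rightarrow> (nat\<times>nat \<Rightarrow> int)" where
  "pr g n c = (\<lambda>u. \<Sum>e\<in>bedges g n. (c (tgt n e) - c (src n e)) * (indic (src n e) u - indic (tgt n e) u))"

lemma bedges_eq: "bedges g n = (SIGMA a:{..g}. {..<n a})"
  by (auto simp: bedges_def)

lemma finite_bedges[simp]: "finite (bedges g n)"
  by (simp add: bedges_eq)

lemma bverts_eq: "bverts g n = (\<lambda>(a,i). bvert n a i) ` (SIGMA a:{..g}. {..n a})"
  by (auto simp: bverts_def)

lemma finite_bverts[simp]: "finite (bverts g n)"
  by (simp add: bverts_eq)

lemma bvert_in: "a \<le> g \<Longrightarrow> i \<le> n a \<Longrightarrow> bvert n a i \<in> bverts g n"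
  by (auto simp: bverts_def)

lemma src_in: "e \<in> bedges g n \<Longrightarrow> src n e \<in> bverts g n"
  by (auto simp: src_def bedges_def intro!: bvert_in)

lemma tgt_in: "e \<in> bedges g n \<Longrightarrow> tgt n e \<in> bverts g n"
  by (auto simp: tgt_def bedges_def intro!: bvert_in)

lemma v0_in: "(0,0) \<in> bverts g n"
  using bvert_in[of 0 g 0 n] by (simp add: bvert_def)

lemma src_ne_tgt:
  assumes "\<forall>a\<le>g. 1 \<le> n a" "e \<in> bedges g n" shows "src n e \<noteq> tgt n e"
  using assms by (cases e) (auto simp: src_def tgt_def bvert_def bedges_def)

lemma sum_indic: "finite V \<Longrightarrow> x \<in> V \<Longrightarrow> (\<Sum>u\<in>V. indic x u) = (1::int)"
  by (simp add: indic_def)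

lemma sum_c_indic: "finite V \<Longrightarrow> x \<in> V \<Longrightarrow> (\<Sum>w\<in>V. c w * indic w x) = (c x::int)"
  by (simp add: indic_def if_distrib cong: if_cong)

lemma sum_if_card: "finite A \<Longrightarrow> (\<Sum>e\<in>A. if P e then 1 else 0) = int (card {e\<in>A. P e})"
  by (simp add: sum.If_cases Int_def conj_commute)

lemma fire_delta_edge:
  assumes pos: "\<forall>a\<le>g. 1 \<le> n a" and w: "w \<in> bverts g n"
  shows "fire_delta g n w u = (\<Sum>e\<in>bedges g n. (indic w (tgt n e) - indic w (src n e)) *
            (indic (src n e) u - indic (tgt n e) u))"
proof -
  define R where "R u = (\<Sum>e\<in>bedges g n. (indic w (tgt n e) - indic w (src n e)) *
            (indic (src n e) u - indic (tgt n e) u))" for u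
  have ne: "u \<noteq> w \<Longrightarrow> int (bmult g n u w) = R u" for u
  proof -
    assume uw: "u \<noteq> w"
    let ?P = "\<lambda>e. (src n e, tgt n e) = (u, w) \<or> (src n e, tgt n e) = (w, u)"
    have "R u = (\<Sum>e\<in>bedges g n. if ?P e then 1 else 0)"
      unfolding R_def
    proof (rule sum.cong[OF refl])
      fix e assume "e \<in> bedges g n"
      then have "src n e \<noteq> tgt n e" using src_ne_tgt pos by blast
      then show "(indic w (tgt n e) - indic w (src n e)) * (indic (src n e) u - indic (tgt n e) u) =
        (if ?P e then 1 else 0)" using uw by (auto simp: indic_def)
    qed
    also have "\<dots> = int (card {e\<in>bedges g n. ?P e})" by (rule sum_if_card) simp
    finally show ?thesis by (simp add: bmult_def src_def tgt_def)
  qed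
  have tot: "(\<Sum>u\<in>bverts g n. R u) = 0"
  proof -
    have "(\<Sum>u\<in>bverts g n. R u) = (\<Sum>e\<in>bedges g n. (indic w (tgt n e) - indic w (src n e)) *
            (\<Sum>u\<in>bverts g n. (indic (src n e) u - indic (tgt n e) u)))"
      unfolding R_def by (subst sum.swap) (simp add: sum_distrib_left)
    also have "\<dots> = 0"
      by (rule sum.neutral) (simp add: sum_subtractf sum_indic src_in tgt_in)
    finally show ?thesis .
  qed
  show ?thesis
  proof (cases "u = w")
    case True
    have "fire_delta g n w u = - (\<Sum>u\<in>bverts g n - {w}. int (bmult g n u w))"
      using True by (simp add: fire_delta_def bval_def)
    also have "\<dots> = - (\<Sum>u\<in>bverts g n - {w}. R u)"
      by (simp add: ne)
    also have "\<dots> = R w"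
      using tot w by (simp add: sum.remove)
    finally show ?thesis using True R_def by simp
  next
    case False
    then show ?thesis using ne[OF False] by (simp add: fire_delta_def R_def)
  qed
qed

lemma Prin_eq: assumes "\<forall>a\<le>g. 1 \<le> n a" shows "Prin g n = range (pr g n)"
proof -
  have "(\<lambda>u. \<Sum>w \<in> bverts g n. c w * fire_delta g n w u) = pr g n c" for c
  proof
    fix u
    have "(\<Sum>w \<in> bverts g n. c w * fire_delta g n w u) =
      (\<Sum>w \<in> bverts g n. \<Sum>e\<in>bedges g n. c w * ((indic w (tgt n e) - indic w (src n e)) *
            (indic (src n e) u - indic (tgt n e) u)))"
      by (simp add: fire_delta_edge[OF assms] sum_distrib_left)
    also have "\<dots> = (\<Sum>e\<in>bedges g n. \<Sum>w \<in> bverts g n. (c w * (indic w (tgt n e) - indic w (src n e))) *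
            (indic (src n e) u - indic (tgt n e) u))"
      by (subst sum.swap) (simp add: mult.assoc)
    also have "\<dots> = (\<Sum>e\<in>bedges g n. (\<Sum>w \<in> bverts g n. c w * (indic w (tgt n e) - indic w (src n e))) *
            (indic (src n e) u - indic (tgt n e) u))"
      by (simp add: sum_distrib_right)
    also have "\<dots> = pr g n c u"
      by (simp add: pr_def right_diff_distrib sum_subtractf sum_c_indic src_in tgt_in)
    finally show "(\<Sum>w \<in> bverts g n. c w * fire_delta g n w u) = pr g n c u" .
  qed
  then show ?thesis by (auto simp: Prin_def)
qed

lemma pr_add: "pr g n (\<lambda>w. c w + d w) = (\<lambda>u. pr g n c u + pr g n d u)"
proof
  fix u show "pr g n (\<lambda>w. c w + d w) u = pr g n c u + pr g n d u"
    unfolding pr_def sum.distrib[symmetric] by (rule sum.cong) (simp_all add: left_diff_distrib distrib_right)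
qed

lemma pr_smult: "pr g n (\<lambda>w. k * c w) = (\<lambda>u. k * pr g n c u)"
  by (auto simp: pr_def algebra_simps sum_distrib_left)

lemma pr_zero: "pr g n (\<lambda>w. 0) = (\<lambda>u. 0)"
  by (auto simp: pr_def)

lemma range_pr_add: "x \<in> range (pr g n) \<Longrightarrow> y \<in> range (pr g n) \<Longrightarrow> (\<lambda>u. x u + y u) \<in> range (pr g n)"
  by (auto simp: pr_add[symmetric])

lemma range_pr_smult: "x \<in> range (pr g n) \<Longrightarrow> (\<lambda>u. k * x u) \<in> range (pr g n)"
  by (auto simp: pr_smult[symmetric])

lemma range_pr_neg: "x \<in> range (pr g n) \<Longrightarrow> (\<lambda>u. - x u) \<in> range (pr g n)"
  using range_pr_smult[of x g n "-1"] by simp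

lemma range_pr_diff: "x \<in> range (pr g n) \<Longrightarrow> y \<in> range (pr g n) \<Longrightarrow> (\<lambda>u. x u - y u) \<in> range (pr g n)"
  using range_pr_add[OF _ range_pr_neg, of x g n y] by simp

lemma range_pr_zero: "(\<lambda>u. 0) \<in> range (pr g n)"
  using pr_zero by (metis rangeI)

lemma range_pr_sum:
  assumes "finite S" "\<And>s. s \<in> S \<Longrightarrow> f s \<in> range (pr g n)"
  shows "(\<lambda>u. \<Sum>s\<in>S. f s u) \<in> range (pr g n)"
  using assms
proof (induction S rule: finite_induct)
  case empty then show ?case using range_pr_zero by simp
next
  case (insert x F)
  then show ?case using range_pr_add[of "f x" g n "\<lambda>u. \<Sum>s\<in>F. f s u"] by simp
qed

lemma Div0_carrier: "D \<in> carrier (Div0 g n) \<longleftrightarrow> (\<forall>u. u \<notin> bverts g n \<longrightarrow> D u = 0) \<and> (\<Sum>u \<in> bverts g n. D u) = 0"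
  by (simp add: Div0_def)

lemma Div0_mult[simp]: "D \<otimes>\<^bsub>Div0 g n\<^esub> E = (\<lambda>u. D u + E u)"
  by (simp add: Div0_def)
lemma Div0_one[simp]: "\<one>\<^bsub>Div0 g n\<^esub> = (\<lambda>u. 0)"
  by (simp add: Div0_def)

lemma Zg_carrier: "a \<in> carrier (Zg g) \<longleftrightarrow> (\<forall>i. g < i \<longrightarrow> a i = 0)"
  by (simp add: Zg_def)
lemma Zg_mult[simp]: "a \<otimes>\<^bsub>Zg g\<^esub> b = (\<lambda>i. a i + b i)"
  by (simp add: Zg_def)
lemma Zg_one[simp]: "\<one>\<^bsub>Zg g\<^esub> = (\<lambda>i. 0)"
  by (simp add: Zg_def)

lemma Div0_comm_group: "comm_group (Div0 g n)"
proof (rule comm_groupI)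
  fix x assume x: "x \<in> carrier (Div0 g n)"
  show "\<exists>y\<in>carrier (Div0 g n). y \<otimes>\<^bsub>Div0 g n\<^esub> x = \<one>\<^bsub>Div0 g n\<^esub>"
    by (rule bexI[of _ "\<lambda>u. - x u"]) (use x in \<open>auto simp: Div0_carrier sum_negf\<close>)
qed (auto simp: Div0_carrier sum.distrib)

lemma Zg_comm_group: "comm_group (Zg g)"
proof (rule comm_groupI)
  fix x assume x: "x \<in> carrier (Zg g)"
  show "\<exists>y\<in>carrier (Zg g). y \<otimes>\<^bsub>Zg g\<^esub> x = \<one>\<^bsub>Zg g\<^esub>"
    by (rule bexI[of _ "\<lambda>u. - x u"]) (use x in \<open>auto simp: Zg_carrier\<close>)
qed (auto simp: Zg_carrier)

lemma Div0_group: "group (Div0 g n)" using Div0_comm_group comm_group_def by blast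
lemma Zg_group: "group (Zg g)" using Zg_comm_group comm_group_def by blast

lemma Div0_inv: "x \<in> carrier (Div0 g n) \<Longrightarrow> inv\<^bsub>Div0 g n\<^esub> x = (\<lambda>u. - x u)"
  by (rule group.inv_equality[OF Div0_group]) (auto simp: Div0_carrier sum_negf)

lemma Zg_inv: "x \<in> carrier (Zg g) \<Longrightarrow> inv\<^bsub>Zg g\<^esub> x = (\<lambda>u. - x u)"
  by (rule group.inv_equality[OF Zg_group]) (auto simp: Zg_carrier)

lemma pr_carrier: "pr g n c \<in> carrier (Div0 g n)"
proof -
  have "(\<Sum>u\<in>bverts g n. pr g n c u) = (\<Sum>e\<in>bedges g n. (c (tgt n e) - c (src n e)) *
            (\<Sum>u\<in>bverts g n. (indic (src n e) u - indic (tgt n e) u)))"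
    unfolding pr_def by (subst sum.swap) (simp add: sum_distrib_left)
  also have "\<dots> = 0"
    by (rule sum.neutral) (simp add: sum_subtractf sum_indic src_in tgt_in)
  finally have "(\<Sum>u\<in>bverts g n. pr g n c u) = 0" .
  moreover have "u \<notin> bverts g n \<Longrightarrow> pr g n c u = 0" for u
    unfolding pr_def by (rule sum.neutral) (auto simp: indic_def dest: src_in tgt_in)
  ultimately show ?thesis by (simp add: Div0_carrier)
qed

lemma Prin_subgroup: assumes "\<forall>a\<le>g. 1 \<le> n a" shows "subgroup (Prin g n) (Div0 g n)"
  unfolding Prin_eq[OF assms]
proof (rule group.subgroupI[OF Div0_group])
  show "range (pr g n) \<subseteq> carrier (Div0 g n)" using pr_carrier by blast
  show "range (pr g n) \<noteq> {}" by simp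
  fix a b assume a: "a \<in> range (pr g n)" and b: "b \<in> range (pr g n)"
  show "inv\<^bsub>Div0 g n\<^esub> a \<in> range (pr g n)"
    using a pr_carrier by (auto simp: Div0_inv intro!: range_pr_neg)
  show "a \<otimes>\<^bsub>Div0 g n\<^esub> b \<in> range (pr g n)" using a b by (simp add: range_pr_add)
qed

lemma Prin_normal: assumes "\<forall>a\<le>g. 1 \<le> n a" shows "Prin g n \<lhd> Div0 g n"
  by (rule comm_group.subgroup_imp_normal[OF Div0_comm_group Prin_subgroup[OF assms]])

definition phi :: "nat \<Rightarrow> (nat \<Rightarrow> nat) \<Rightarrow> (nat \<Rightarrow> int) \<Rightarrow> (nat \<times> nat \<Rightarrow> int)" where
  "phi g n a = (\<lambda>u. \<Sum>\<alpha>\<le>g. a \<alpha> * (indic (bvert n \<alpha> 1) u - indic (0, 0) u))"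

lemma phi_carrier: assumes "\<forall>a\<le>g. 1 \<le> n a" shows "phi g n a \<in> carrier (Div0 g n)"
proof -
  have "(\<Sum>u\<in>bverts g n. phi g n a u) = (\<Sum>\<alpha>\<le>g. a \<alpha> * (\<Sum>u\<in>bverts g n. (indic (bvert n \<alpha> 1) u - indic (0, 0) u)))"
    unfolding phi_def by (subst sum.swap) (simp add: sum_distrib_left)
  also have "\<dots> = 0"
    using assms by (intro sum.neutral) (simp add: sum_subtractf sum_indic bvert_in v0_in)
  finally have "(\<Sum>u\<in>bverts g n. phi g n a u) = 0" .
  moreover have "u \<notin> bverts g n \<Longrightarrow> phi g n a u = 0" for u
    unfolding phi_def using assms v0_in[of g n] by (intro sum.neutral) (auto simp: indic_def dest: bvert_in)
  ultimately show ?thesis by (simp add: Div0_carrier)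
qed

lemma phi_add: "phi g n (\<lambda>i. a i + b i) = (\<lambda>u. phi g n a u + phi g n b u)"
proof
  fix u show "phi g n (\<lambda>i. a i + b i) u = phi g n a u + phi g n b u"
    unfolding phi_def sum.distrib[symmetric] by (rule sum.cong) (simp_all add: distrib_right)
qed

lemma phi_hom: assumes "\<forall>a\<le>g. 1 \<le> n a" shows "phi g n \<in> hom (Zg g) (Div0 g n)"
  by (rule homI) (auto simp: phi_carrier[OF assms] phi_add)

definition psi where "psi g n a = Prin g n #>\<^bsub>Div0 g n\<^esub> phi g n a"

lemma psi_hom: assumes "\<forall>a\<le>g. 1 \<le> n a" shows "psi g n \<in> hom (Zg g) (Jac g n)"
proof -
  have h: "(\<lambda>a. Prin g n #>\<^bsub>Div0 g n\<^esub> a) \<in> hom (Div0 g n) (Jac g n)"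
    unfolding Jac_def by (rule normal.r_coset_hom_Mod[OF Prin_normal[OF assms]])
  show ?thesis
  proof (rule homI)
    fix x assume "x \<in> carrier (Zg g)"
    show "psi g n x \<in> carrier (Jac g n)"
      unfolding psi_def by (rule hom_in_carrier[OF h phi_carrier[OF assms]])
  next
    fix x y assume "x \<in> carrier (Zg g)" "y \<in> carrier (Zg g)"
    show "psi g n (x \<otimes>\<^bsub>Zg g\<^esub> y) = psi g n x \<otimes>\<^bsub>Jac g n\<^esub> psi g n y"
      unfolding psi_def using hom_mult[OF h phi_carrier[OF assms] phi_carrier[OF assms], of x y]
      by (simp add: phi_add)
  qed
qed

lemma Jac_group: assumes "\<forall>a\<le>g. 1 \<le> n a" shows "group (Jac g n)"
  unfolding Jac_def by (rule normal.factorgroup_is_group[OF Prin_normal[OF assms]])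

lemma psi_group_hom: assumes "\<forall>a\<le>g. 1 \<le> n a" shows "group_hom (Zg g) (Jac g n) (psi g n)"
  using psi_hom[OF assms] Jac_group[OF assms] Zg_group
  by (simp add: group_hom_def group_hom_axioms_def)

lemma sum_delta_edge:
  assumes "z \<in> S" "finite S"
  shows "(\<Sum>e\<in>S. (if e = z then 1 else 0) * (Y e :: int)) = Y z"
proof -
  have "(\<Sum>e\<in>S. (if e = z then 1 else 0) * (Y e :: int)) = (\<Sum>e\<in>S. if e = z then Y e else 0)"
    by (rule sum.cong) auto
  then show ?thesis using assms by simp
qed

lemma step_pr:
  assumes pos: "\<forall>a\<le>g. 1 \<le> n a" and al: "\<alpha> \<le> g" and i1: "1 \<le> i" and inn: "i < n \<alpha>"
  shows "pr g n (\<lambda>p. if fst p = \<alpha> \<and> 1 \<le> snd p \<and> snd p \<le> i then 1 else 0) =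
    (\<lambda>x. indic (bvert n \<alpha> (Suc i)) x - indic (bvert n \<alpha> i) x - (indic (bvert n \<alpha> 1) x - indic (0,0) x))"
proof
  fix x
  define c where "c = (\<lambda>p::nat\<times>nat. if fst p = \<alpha> \<and> 1 \<le> snd p \<and> snd p \<le> i then 1 else (0::int))"
  have cv: "j \<le> n \<beta> \<Longrightarrow> c (bvert n \<beta> j) = (if \<beta> = \<alpha> \<and> 1 \<le> j \<and> j \<le> i then 1 else 0)" for \<beta> j
    using inn by (auto simp: c_def bvert_def)
  have ce: "e \<in> bedges g n \<Longrightarrow> c (tgt n e) - c (src n e) =
      (if e = (\<alpha>, 0) then 1 else 0) - (if e = (\<alpha>, i) then 1 else 0)" for e
  proof (cases e)
    case (Pair \<beta> k)
    assume eE: "e \<in> bedges g n"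
    then have k: "k < n \<beta>" using Pair by (simp add: bedges_def)
    have 1: "c (tgt n e) = (if \<beta> = \<alpha> \<and> 1 \<le> Suc k \<and> Suc k \<le> i then 1 else 0)"
      using cv[of "Suc k" \<beta>] k Pair by (simp add: tgt_def)
    have 2: "c (src n e) = (if \<beta> = \<alpha> \<and> 1 \<le> k \<and> k \<le> i then 1 else 0)"
      using cv[of k \<beta>] k Pair by (simp add: src_def)
    show ?thesis unfolding 1 2 using Pair i1 by auto
  qed
  have e0: "(\<alpha>, 0) \<in> bedges g n" and ei: "(\<alpha>, i) \<in> bedges g n"
    using al inn by (auto simp: bedges_def)
  let ?X = "\<lambda>e. indic (src n e) x - indic (tgt n e) x"
  have "pr g n c x = (\<Sum>e\<in>bedges g n. (if e = (\<alpha>, 0) then 1 else 0) * ?X e - (if e = (\<alpha>, i) then 1 else 0) * ?X e)"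
    unfolding pr_def by (rule sum.cong) (simp_all add: ce left_diff_distrib)
  also have "\<dots> = ?X (\<alpha>, 0) - ?X (\<alpha>, i)"
    by (simp only: sum_subtractf sum_delta_edge[OF e0 finite_bedges] sum_delta_edge[OF ei finite_bedges])
  also have "\<dots> = indic (bvert n \<alpha> (Suc i)) x - indic (bvert n \<alpha> i) x - (indic (bvert n \<alpha> 1) x - indic (0,0) x)"
    by (simp add: src_def tgt_def bvert_def[of n \<alpha> 0])
  finally show "pr g n (\<lambda>p. if fst p = \<alpha> \<and> 1 \<le> snd p \<and> snd p \<le> i then 1 else 0) x = \<dots>"
    by (simp add: c_def)
qed

lemma path_pr:
  assumes pos: "\<forall>a\<le>g. 1 \<le> n a" and al: "\<alpha> \<le> g"
  shows "i \<le> n \<alpha> \<Longrightarrow> (\<lambda>x. indic (bvert n \<alpha> i) x - indic (0,0) x - int i * (indic (bvert n \<alpha> 1) x - indic (0,0) x)) \<in> range (pr g n)"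
proof (induction i)
  case 0
  then show ?case using range_pr_zero by (simp add: bvert_def)
next
  case (Suc i)
  show ?case
  proof (cases "i = 0")
    case True
    then show ?thesis using range_pr_zero by simp
  next
    case False
    have "(\<lambda>x. indic (bvert n \<alpha> (Suc i)) x - indic (bvert n \<alpha> i) x - (indic (bvert n \<alpha> 1) x - indic (0,0) x)) \<in> range (pr g n)"
    proof -
      have "1 \<le> i" "i < n \<alpha>" using False Suc.prems by simp_all
      show ?thesis by (subst step_pr[OF pos al \<open>1 \<le> i\<close> \<open>i < n \<alpha>\<close>, symmetric]) (rule rangeI)
    qed
    from range_pr_add[OF Suc.IH[OF Suc_leD[OF Suc.prems]] this]
    show ?thesis by (simp add: algebra_simps)
  qed
qed

lemma path_alg:
  fixes f :: "nat \<Rightarrow> int"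
  assumes N: "1 \<le> N"
    and eq: "\<And>j. 0 < j \<Longrightarrow> j < N \<Longrightarrow> f (Suc j) - f j - (f j - f (j - 1)) = (if j = 1 then A else 0)"
  shows "f N - f 0 = int N * (f 1 - f 0 + A) - A"
proof -
  define d where "d = f 1 - f 0 + A"
  have Q: "1 \<le> k \<Longrightarrow> k < N \<Longrightarrow> f (Suc k) - f k = d" for k
  proof (induction k)
    case 0 then show ?case by simp
  next
    case (Suc k)
    show ?case
    proof (cases "k = 0")
      case True
      then show ?thesis using eq[of 1] Suc.prems by (simp add: d_def)
    next
      case False
      then have "f (Suc k) - f k = d" using Suc by simp
      moreover have "f (Suc (Suc k)) - f (Suc k) - (f (Suc k) - f k) = 0"
        using eq[of "Suc k"] Suc.prems False by simp
      ultimately show ?thesis by simp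
    qed
  qed
  have P: "1 \<le> j \<Longrightarrow> j \<le> N \<Longrightarrow> f j = f 1 + int (j - 1) * d" for j
  proof (induction j)
    case 0 then show ?case by simp
  next
    case (Suc j)
    show ?case
    proof (cases "j = 0")
      case True then show ?thesis by simp
    next
      case False
      then have "f j = f 1 + int (j - 1) * d" using Suc by simp
      moreover have "f (Suc j) - f j = d" using Q[of j] False Suc.prems by simp
      ultimately show ?thesis using False by (simp add: algebra_simps of_nat_diff)
    qed
  qed
  show ?thesis using P[of N] N by (simp add: d_def algebra_simps of_nat_diff)
qed

lemma sum_E_snd0:
  assumes pos: "\<forall>a\<le>g. 1 \<le> n a"
  shows "(\<Sum>e\<in>bedges g n. if snd e = 0 then F e else (0::int)) = (\<Sum>\<beta>\<le>g. F (\<beta>,0))"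
proof -
  have "(\<Sum>e\<in>bedges g n. if snd e = 0 then F e else (0::int)) =
      (\<Sum>\<beta>\<le>g. \<Sum>k<n \<beta>. if k = 0 then F (\<beta>, k) else 0)"
    unfolding bedges_eq by (subst sum.Sigma) (auto simp: split_beta intro!: sum.cong)
  also have "\<dots> = (\<Sum>\<beta>\<le>g. F (\<beta>,0))"
    by (rule sum.cong) (use pos in auto)
  finally show ?thesis .
qed

lemma src_v0: assumes pos: "\<forall>a\<le>g. 1 \<le> n a" "e \<in> bedges g n"
  shows "indic (src n e) (0,0) = (if snd e = 0 then 1 else 0)"
  using assms by (cases e) (auto simp: indic_def src_def bvert_def bedges_def)

lemma tgt_v0: assumes pos: "\<forall>a\<le>g. 1 \<le> n a" "e \<in> bedges g n"
  shows "indic (tgt n e) (0,0) = 0"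
  using assms by (cases e) (auto simp: indic_def tgt_def bvert_def bedges_def)

lemma pr_v0: assumes pos: "\<forall>a\<le>g. 1 \<le> n a"
  shows "pr g n c (0,0) = (\<Sum>\<beta>\<le>g. c (bvert n \<beta> 1) - c (0,0))"
proof -
  have "pr g n c (0,0) = (\<Sum>e\<in>bedges g n. if snd e = 0 then c (tgt n e) - c (src n e) else 0)"
    unfolding pr_def by (rule sum.cong) (simp_all add: src_v0[OF pos] tgt_v0[OF pos])
  also have "\<dots> = (\<Sum>\<beta>\<le>g. c (bvert n \<beta> 1) - c (0,0))"
    by (simp add: sum_E_snd0[OF pos] src_def tgt_def bvert_def[of n _ 0])
  finally show ?thesis .
qed

lemma phi_v0: assumes pos: "\<forall>a\<le>g. 1 \<le> n a"
  shows "phi g n a (0,0) = - (\<Sum>\<beta>\<le>g. a \<beta>)"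
proof -
  have "phi g n a (0,0) = (\<Sum>\<beta>\<le>g. - a \<beta>)"
    unfolding phi_def using pos by (intro sum.cong) (auto simp: indic_def bvert_def)
  then show ?thesis by (simp add: sum_negf)
qed

lemma indic_sym: "indic x y = indic y x"
  by (auto simp: indic_def)

lemma K1: assumes pos: "\<forall>a\<le>g. 1 \<le> n a"
  shows "phi g n (\<lambda>i. if i \<le> g then 1 else 0) = pr g n (indic (0,0))"
proof
  fix u
  have "pr g n (indic (0,0)) u = (\<Sum>e\<in>bedges g n. if snd e = 0 then indic (tgt n e) u - indic (src n e) u else 0)"
    unfolding pr_def
  proof (rule sum.cong[OF refl])
    fix e assume e: "e \<in> bedges g n"
    have "indic (0,0) (tgt n e) = 0" using tgt_v0[OF pos e] by (simp add: indic_sym)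
    moreover have "indic (0,0) (src n e) = (if snd e = 0 then 1 else 0)"
      using src_v0[OF pos e] by (simp add: indic_sym)
    ultimately show "(indic (0,0) (tgt n e) - indic (0,0) (src n e)) * (indic (src n e) u - indic (tgt n e) u) =
      (if snd e = 0 then indic (tgt n e) u - indic (src n e) u else 0)" by simp
  qed
  also have "\<dots> = (\<Sum>\<beta>\<le>g. indic (tgt n (\<beta>,0)) u - indic (src n (\<beta>,0)) u)"
    by (rule sum_E_snd0[OF pos])
  also have "\<dots> = (\<Sum>\<beta>\<le>g. indic (bvert n \<beta> 1) u - indic (0,0) u)"
    by (simp only: src_def tgt_def fst_conv snd_conv One_nat_def) (simp add: bvert_def[of n _ 0])
  also have "\<dots> = phi g n (\<lambda>i. if i \<le> g then 1 else 0) u"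
    by (simp add: phi_def)
  finally show "phi g n (\<lambda>i. if i \<le> g then 1 else 0) u = pr g n (indic (0,0)) u" by simp
qed

lemma sum_indic_mult:
  assumes "k \<in> S" "finite S"
  shows "(\<Sum>\<beta>\<in>S. (c * indic k \<beta>) * (Y \<beta> :: int)) = c * Y k"
proof -
  have "(\<Sum>\<beta>\<in>S. (c * indic k \<beta>) * (Y \<beta> :: int)) = (\<Sum>\<beta>\<in>S. if \<beta> = k then c * Y \<beta> else 0)"
    by (rule sum.cong) (auto simp: indic_def)
  then show ?thesis using assms by simp
qed

lemma K2: assumes pos: "\<forall>a\<le>g. 1 \<le> n a" and al: "1 \<le> \<alpha>" "\<alpha> \<le> g"
  shows "phi g n (\<lambda>i. int (n 0) * indic 0 i - int (n \<alpha>) * indic \<alpha> i) \<in> range (pr g n)"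
proof -
  let ?I = "\<lambda>\<beta> x. indic (bvert n \<beta> 1) x - indic (0,0) x"
  have P0: "(\<lambda>x. indic (bvert n 0 (n 0)) x - indic (0,0) x - int (n 0) * ?I 0 x) \<in> range (pr g n)"
    by (rule path_pr[OF pos]) simp_all
  have Pa: "(\<lambda>x. indic (bvert n \<alpha> (n \<alpha>)) x - indic (0,0) x - int (n \<alpha>) * ?I \<alpha> x) \<in> range (pr g n)"
    by (rule path_pr[OF pos]) (use al in simp_all)
  have b: "bvert n \<alpha> (n \<alpha>) = bvert n 0 (n 0)" using pos al by (auto simp: bvert_def)
  have "phi g n (\<lambda>i. int (n 0) * indic 0 i - int (n \<alpha>) * indic \<alpha> i) =
     (\<lambda>x. (indic (bvert n \<alpha> (n \<alpha>)) x - indic (0,0) x - int (n \<alpha>) * ?I \<alpha> x) -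
          (indic (bvert n 0 (n 0)) x - indic (0,0) x - int (n 0) * ?I 0 x))"
  proof
    fix x
    have "phi g n (\<lambda>i. int (n 0) * indic 0 i - int (n \<alpha>) * indic \<alpha> i) x =
      (\<Sum>\<beta>\<le>g. (int (n 0) * indic 0 \<beta>) * ?I \<beta> x) - (\<Sum>\<beta>\<le>g. (int (n \<alpha>) * indic \<alpha> \<beta>) * ?I \<beta> x)"
      unfolding phi_def sum_subtractf[symmetric] by (rule sum.cong) (simp_all add: left_diff_distrib)
    also have "\<dots> = int (n 0) * ?I 0 x - int (n \<alpha>) * ?I \<alpha> x"
      using al by (simp add: sum_indic_mult)
    finally show "phi g n (\<lambda>i. int (n 0) * indic 0 i - int (n \<alpha>) * indic \<alpha> i) x =
      (indic (bvert n \<alpha> (n \<alpha>)) x - indic (0,0) x - int (n \<alpha>) * ?I \<alpha> x) -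
          (indic (bvert n 0 (n 0)) x - indic (0,0) x - int (n 0) * ?I 0 x)"
      unfolding b by simp
  qed
  then show ?thesis using range_pr_diff[OF Pa P0] by simp
qed

lemma src_int: assumes "e \<in> bedges g n" "0 < j" "j < n \<alpha>"
  shows "indic (src n e) (\<alpha>, j) = (if e = (\<alpha>, j) then 1 else 0)"
  using assms by (cases e) (auto simp: indic_def src_def bvert_def bedges_def)

lemma tgt_int: assumes pos: "\<forall>a\<le>g. 1 \<le> n a" "e \<in> bedges g n" "0 < j" "j < n \<alpha>"
  shows "indic (tgt n e) (\<alpha>, j) = (if e = (\<alpha>, j - 1) then 1 else 0)"
  using assms by (cases e) (auto simp: indic_def tgt_def bvert_def bedges_def)

lemma bvert_int: "0 < j \<Longrightarrow> j < n \<alpha> \<Longrightarrow> bvert n \<alpha> j = (\<alpha>, j)"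
  by (simp add: bvert_def)

lemma pr_int: assumes pos: "\<forall>a\<le>g. 1 \<le> n a" and al: "\<alpha> \<le> g" and j: "0 < j" "j < n \<alpha>"
  shows "pr g n c (\<alpha>, j) = c (bvert n \<alpha> (Suc j)) - c (bvert n \<alpha> j) - (c (bvert n \<alpha> j) - c (bvert n \<alpha> (j - 1)))"
proof -
  let ?Y = "\<lambda>e. c (tgt n e) - c (src n e)"
  have e1: "(\<alpha>, j) \<in> bedges g n" and e2: "(\<alpha>, j - 1) \<in> bedges g n" using al j by (auto simp: bedges_def)
  have "pr g n c (\<alpha>, j) = (\<Sum>e\<in>bedges g n. (if e = (\<alpha>, j) then 1 else 0) * ?Y e - (if e = (\<alpha>, j - 1) then 1 else 0) * ?Y e)"
    unfolding pr_def by (rule sum.cong) (use j pos in \<open>simp_all add: src_int tgt_int right_diff_distrib\<close>)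
  also have "\<dots> = ?Y (\<alpha>, j) - ?Y (\<alpha>, j - 1)"
    by (simp only: sum_subtractf sum_delta_edge[OF e1 finite_bedges] sum_delta_edge[OF e2 finite_bedges])
  also have "\<dots> = c (bvert n \<alpha> (Suc j)) - c (bvert n \<alpha> j) - (c (bvert n \<alpha> j) - c (bvert n \<alpha> (j - 1)))"
    using j by (simp add: src_def tgt_def)
  finally show ?thesis .
qed

lemma phi_int: assumes pos: "\<forall>a\<le>g. 1 \<le> n a" and al: "\<alpha> \<le> g" and j: "0 < j" "j < n \<alpha>"
  shows "phi g n a (\<alpha>, j) = (if j = 1 then a \<alpha> else 0)"
proof -
  have "phi g n a (\<alpha>, j) = (\<Sum>\<beta>\<le>g. if \<beta> = \<alpha> then (if j = 1 then a \<alpha> else 0) else 0)"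
    unfolding phi_def using j by (intro sum.cong) (auto simp: indic_def bvert_def)
  then show ?thesis using al by simp
qed

lemma Kgen_carrier: "Kgen g n \<subseteq> carrier (Zg g)"
  by (auto simp: Kgen_def Zg_carrier indic_def)

lemma Ksub_subgroup: "subgroup (Ksub g n) (Zg g)"
  unfolding Ksub_def by (rule group.generate_is_subgroup[OF Zg_group Kgen_carrier])

lemma Zsub_add: "subgroup H (Zg g) \<Longrightarrow> x \<in> H \<Longrightarrow> y \<in> H \<Longrightarrow> (\<lambda>i. x i + y i) \<in> H"
  using subgroup.m_closed[of H "Zg g" x y] by simp

lemma Zsub_neg: "subgroup H (Zg g) \<Longrightarrow> x \<in> H \<Longrightarrow> (\<lambda>i. - x i) \<in> H"
  using subgroup.m_inv_closed[of H "Zg g" x] Zg_inv[of x g] subgroup.mem_carrier[of H "Zg g" x] by simp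

lemma Zsub_zero: "subgroup H (Zg g) \<Longrightarrow> (\<lambda>i. 0) \<in> H"
  using subgroup.one_closed[of H "Zg g"] by simp

lemma Zsub_nat: assumes "subgroup H (Zg g)" "x \<in> H" shows "(\<lambda>i. int k * x i) \<in> H"
proof (induction k)
  case 0 then show ?case using Zsub_zero[OF assms(1)] by simp
next
  case (Suc k)
  have "(\<lambda>i. int (Suc k) * x i) = (\<lambda>i. int k * x i + x i)" by (rule ext) (simp add: distrib_right)
  then show ?case using Zsub_add[OF assms(1) Suc assms(2)] by simp
qed

lemma Zsub_smult: assumes "subgroup H (Zg g)" "x \<in> H" shows "(\<lambda>i. k * x i) \<in> H"
proof (cases "0 \<le> k")
  case True
  then show ?thesis using Zsub_nat[OF assms, of "nat k"] by simp
next
  case False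
  have "(\<lambda>i. k * x i) = (\<lambda>i. - (int (nat (-k)) * x i))" by (rule ext) (use False in simp)
  then show ?thesis using Zsub_neg[OF assms(1) Zsub_nat[OF assms, of "nat (-k)"]] by simp
qed

lemma Zsub_sum: assumes "subgroup H (Zg g)" "finite S" "\<And>s. s \<in> S \<Longrightarrow> f s \<in> H"
  shows "(\<lambda>i. \<Sum>s\<in>S. f s i) \<in> H"
  using assms(2,3)
proof (induction S rule: finite_induct)
  case empty then show ?case using Zsub_zero[OF assms(1)] by simp
next
  case (insert x F)
  then show ?case using Zsub_add[OF assms(1), of "f x" "\<lambda>i. \<Sum>s\<in>F. f s i"] by simp
qed

lemma ker_eq: assumes pos: "\<forall>a\<le>g. 1 \<le> n a"
  shows "kernel (Zg g) (Jac g n) (psi g n) = {a \<in> carrier (Zg g). phi g n a \<in> Prin g n}"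
proof -
  have "psi g n a = Prin g n \<longleftrightarrow> phi g n a \<in> Prin g n" if a: "a \<in> carrier (Zg g)" for a
  proof
    assume h: "psi g n a = Prin g n"
    have "phi g n a \<in> Prin g n #>\<^bsub>Div0 g n\<^esub> phi g n a"
      by (rule group.rcos_self[OF Div0_group phi_carrier[OF pos] Prin_subgroup[OF pos]])
    then show "phi g n a \<in> Prin g n" using h by (simp add: psi_def)
  next
    assume "phi g n a \<in> Prin g n"
    then show "psi g n a = Prin g n"
      unfolding psi_def by (rule subgroup.rcos_const[OF Prin_subgroup[OF pos] Div0_group])
  qed
  moreover have "\<one>\<^bsub>Jac g n\<^esub> = Prin g n" by (simp add: Jac_def FactGroup_def)
  ultimately show ?thesis unfolding kernel_def by blast
qed

lemma Ksub_ker: assumes pos: "\<forall>a\<le>g. 1 \<le> n a"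
  shows "Ksub g n \<subseteq> kernel (Zg g) (Jac g n) (psi g n)"
  unfolding Ksub_def
proof (rule group.generate_subgroup_incl[OF Zg_group _ group_hom.subgroup_kernel[OF psi_group_hom[OF pos]]])
  show "Kgen g n \<subseteq> kernel (Zg g) (Jac g n) (psi g n)"
    unfolding ker_eq[OF pos] Prin_eq[OF pos]
  proof
    fix x assume x: "x \<in> Kgen g n"
    then have xc: "x \<in> carrier (Zg g)" using Kgen_carrier by blast
    from x show "x \<in> {a \<in> carrier (Zg g). phi g n a \<in> range (pr g n)}"
      unfolding Kgen_def
    proof (elim UnE)
      assume "x \<in> {\<lambda>i. if i \<le> g then 1 else 0}"
      then have "x = (\<lambda>i. if i \<le> g then 1 else 0)" by simp
      then show ?thesis using xc K1[OF pos] by (metis (mono_tags, lifting) mem_Collect_eq rangeI)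
    next
      assume "x \<in> {\<lambda>i. int (n 0) * indic 0 i - int (n \<alpha>) * indic \<alpha> i |\<alpha>. 1 \<le> \<alpha> \<and> \<alpha> \<le> g}"
      then obtain \<alpha> where "x = (\<lambda>i. int (n 0) * indic 0 i - int (n \<alpha>) * indic \<alpha> i)" "1 \<le> \<alpha>" "\<alpha> \<le> g"
        by blast
      then show ?thesis using xc K2[OF pos, of \<alpha>] by simp
    qed
  qed
qed

lemma ker_Ksub:
  assumes pos: "\<forall>a\<le>g. 1 \<le> n a" and ac: "a \<in> carrier (Zg g)" and pc: "phi g n a = pr g n c"
  shows "a \<in> Ksub g n"
proof -
  define f where "f \<beta> j = c (bvert n \<beta> j)" for \<beta> j
  define T where "T = c (0, n 0) - c (0,0)"
  define d where "d \<beta> = f \<beta> 1 - f \<beta> 0 + a \<beta>" for \<beta>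
  have aeq: "a \<beta> = int (n \<beta>) * d \<beta> - T" if b: "\<beta> \<le> g" for \<beta>
  proof -
    have "f \<beta> (n \<beta>) - f \<beta> 0 = int (n \<beta>) * (f \<beta> 1 - f \<beta> 0 + a \<beta>) - a \<beta>"
    proof (rule path_alg)
      show "1 \<le> n \<beta>" using pos b by simp
      fix j assume j: "0 < j" "j < n \<beta>"
      have "pr g n c (\<beta>,j) = phi g n a (\<beta>,j)" using pc by simp
      then show "f \<beta> (Suc j) - f \<beta> j - (f \<beta> j - f \<beta> (j - 1)) = (if j = 1 then a \<beta> else 0)"
        using pr_int[OF pos b j, of c] phi_int[OF pos b j, of a] by (simp add: f_def)
    qed
    moreover have "f \<beta> (n \<beta>) = c (0, n 0)" "f \<beta> 0 = c (0,0)" using pos b by (auto simp: f_def bvert_def)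
    ultimately show ?thesis by (simp add: T_def d_def)
  qed
  have dsum: "(\<Sum>\<beta>\<le>g. d \<beta>) = 0"
  proof -
    have "pr g n c (0,0) = phi g n a (0,0)" using pc by simp
    then have "(\<Sum>\<beta>\<le>g. c (bvert n \<beta> 1) - c (0,0)) = - (\<Sum>\<beta>\<le>g. a \<beta>)"
      using pr_v0[OF pos] phi_v0[OF pos] by simp
    moreover have "(\<Sum>\<beta>\<le>g. d \<beta>) = (\<Sum>\<beta>\<le>g. c (bvert n \<beta> 1) - c (0,0)) + (\<Sum>\<beta>\<le>g. a \<beta>)"
      by (simp add: d_def f_def sum.distrib bvert_def[of n _ 0])
    ultimately show ?thesis by simp
  qed
  have ins: "{..g} = insert 0 {1..g}" by auto
  have dsum': "(\<Sum>\<beta>\<in>{1..g}. d \<beta>) = - d 0"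
    using dsum unfolding ins by simp
  define gen where "gen \<beta> = (\<lambda>i. int (n 0) * indic 0 i - int (n \<beta>) * indic \<beta> i)" for \<beta>
  have aform: "a = (\<lambda>i. (- T) * (if i \<le> g then 1 else 0) + (\<Sum>\<beta>\<in>{1..g}. (- d \<beta>) * gen \<beta> i))"
  proof
    fix i
    show "a i = (- T) * (if i \<le> g then 1 else 0) + (\<Sum>\<beta>\<in>{1..g}. (- d \<beta>) * gen \<beta> i)"
    proof (cases "i \<le> g")
      case False
      then have "a i = 0" using ac by (simp add: Zg_carrier)
      moreover have "(\<Sum>\<beta>\<in>{1..g}. (- d \<beta>) * gen \<beta> i) = 0"
        using False by (intro sum.neutral) (auto simp: gen_def indic_def)
      ultimately show ?thesis using False by simp
    next
      case True
      show ?thesis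
      proof (cases "i = 0")
        case True
        have "(\<Sum>\<beta>\<in>{1..g}. (- d \<beta>) * gen \<beta> i) = (\<Sum>\<beta>\<in>{1..g}. - (int (n 0) * d \<beta>))"
          using True by (intro sum.cong) (auto simp: gen_def indic_def)
        also have "\<dots> = int (n 0) * d 0" using dsum' by (simp add: sum_negf sum_distrib_left[symmetric])
        finally show ?thesis using True aeq[of 0] by simp
      next
        case False
        have "(\<Sum>\<beta>\<in>{1..g}. (- d \<beta>) * gen \<beta> i) = (\<Sum>\<beta>\<in>{1..g}. if \<beta> = i then int (n i) * d i else 0)"
          using False by (intro sum.cong) (auto simp: gen_def indic_def)
        also have "\<dots> = int (n i) * d i" using False \<open>i \<le> g\<close> by simp
        finally show ?thesis using \<open>i \<le> g\<close> aeq[of i] by simp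
      qed
    qed
  qed
  have H: "subgroup (Ksub g n) (Zg g)" by (rule Ksub_subgroup)
  have one: "(\<lambda>i. if i \<le> g then 1 else 0) \<in> Ksub g n"
    unfolding Ksub_def by (rule generate.incl) (simp add: Kgen_def)
  have gens: "gen \<beta> \<in> Ksub g n" if "\<beta> \<in> {1..g}" for \<beta>
    unfolding Ksub_def by (rule generate.incl) (use that in \<open>auto simp: Kgen_def gen_def\<close>)
  have "(\<lambda>i. (- T) * (if i \<le> g then 1 else 0) + (\<Sum>\<beta>\<in>{1..g}. (- d \<beta>) * gen \<beta> i)) \<in> Ksub g n"
    by (rule Zsub_add[OF H Zsub_smult[OF H one] Zsub_sum[OF H finite_atLeastAtMost Zsub_smult[OF H gens]]])
  then show ?thesis using aform by simp
qed

lemma coset_eq: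
  assumes pos: "\<forall>a\<le>g. 1 \<le> n a" and x: "x \<in> carrier (Div0 g n)" and d: "(\<lambda>u. y u - x u) \<in> range (pr g n)"
  shows "Prin g n #>\<^bsub>Div0 g n\<^esub> x = Prin g n #>\<^bsub>Div0 g n\<^esub> y"
proof -
  have "(\<lambda>u. y u - x u) \<otimes>\<^bsub>Div0 g n\<^esub> x \<in> Prin g n #>\<^bsub>Div0 g n\<^esub> x"
    by (rule group.rcosI[OF Div0_group]) (use d x pos Prin_eq[OF pos] pr_carrier in auto)
  moreover have "(\<lambda>u. y u - x u) \<otimes>\<^bsub>Div0 g n\<^esub> x = y" by simp
  ultimately have "y \<in> Prin g n #>\<^bsub>Div0 g n\<^esub> x" by simp
  then show ?thesis by (rule group.repr_independence[OF Div0_group _ x Prin_subgroup[OF pos]])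
qed

lemma vert_repr: assumes "u \<in> bverts g n"
  shows "fst u \<le> g \<and> snd u \<le> n (fst u) \<and> bvert n (fst u) (snd u) = u"
  using assms unfolding bverts_def by (auto simp: bvert_def split: if_splits)

lemma surj_core:
  assumes pos: "\<forall>a\<le>g. 1 \<le> n a" and D: "D \<in> carrier (Div0 g n)"
  shows "\<exists>a\<in>carrier (Zg g). (\<lambda>u. D u - phi g n a u) \<in> range (pr g n)"
proof -
  let ?V = "bverts g n"
  let ?I = "\<lambda>\<beta> x. indic (bvert n \<beta> 1) x - indic (0,0) x"
  define a where "a \<beta> = (if \<beta> \<le> g then (\<Sum>u\<in>?V. D u * (if fst u = \<beta> then int (snd u) else 0)) else 0)" for \<beta>
  have ac: "a \<in> carrier (Zg g)" by (simp add: a_def Zg_carrier)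
  have Dz: "\<And>u. u \<notin> ?V \<Longrightarrow> D u = 0" and Ds: "(\<Sum>u\<in>?V. D u) = 0" using D by (auto simp: Div0_carrier)
  have eq: "D x - phi g n a x = (\<Sum>u\<in>?V. D u * (indic u x - indic (0,0) x - int (snd u) * ?I (fst u) x))" for x
  proof -
    have "(\<Sum>u\<in>?V. D u * indic u x) = D x"
    proof -
      have "(\<Sum>u\<in>?V. D u * indic u x) = (\<Sum>u\<in>?V. if u = x then D x else 0)"
        by (rule sum.cong) (auto simp: indic_def)
      then show ?thesis using Dz by auto
    qed
    moreover have "(\<Sum>u\<in>?V. D u * indic (0,0) x) = 0" using Ds by (simp add: sum_distrib_right[symmetric])
    moreover have "phi g n a x = (\<Sum>u\<in>?V. D u * (int (snd u) * ?I (fst u) x))"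
    proof -
      have "phi g n a x = (\<Sum>\<beta>\<le>g. \<Sum>u\<in>?V. D u * (if fst u = \<beta> then int (snd u) else 0) * ?I \<beta> x)"
        unfolding phi_def by (rule sum.cong) (simp_all add: a_def sum_distrib_right)
      also have "\<dots> = (\<Sum>u\<in>?V. \<Sum>\<beta>\<le>g. if \<beta> = fst u then D u * (int (snd u) * ?I \<beta> x) else 0)"
        by (subst sum.swap) (rule sum.cong, simp, rule sum.cong, auto)
      also have "\<dots> = (\<Sum>u\<in>?V. D u * (int (snd u) * ?I (fst u) x))"
        by (rule sum.cong) (auto dest: vert_repr)
      finally show ?thesis .
    qed
    ultimately show ?thesis
      by (simp add: right_diff_distrib sum_subtractf)
  qed
  have "(\<lambda>x. \<Sum>u\<in>?V. D u * (indic u x - indic (0,0) x - int (snd u) * ?I (fst u) x)) \<in> range (pr g n)"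
  proof (rule range_pr_sum)
    fix u assume u: "u \<in> ?V"
    have "(\<lambda>x. indic (bvert n (fst u) (snd u)) x - indic (0,0) x - int (snd u) * ?I (fst u) x) \<in> range (pr g n)"
      using vert_repr[OF u] by (intro path_pr[OF pos]) simp_all
    then show "(\<lambda>x. D u * (indic u x - indic (0,0) x - int (snd u) * ?I (fst u) x)) \<in> range (pr g n)"
      using vert_repr[OF u] range_pr_smult by fastforce
  qed simp
  then show ?thesis using ac eq by (intro bexI[of _ a]) simp_all
qed

lemma Ksub_eq_kernel: assumes pos: "\<forall>a\<le>g. 1 \<le> n a"
  shows "kernel (Zg g) (Jac g n) (psi g n) = Ksub g n"
proof
  show "Ksub g n \<subseteq> kernel (Zg g) (Jac g n) (psi g n)" by (rule Ksub_ker[OF pos])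
  show "kernel (Zg g) (Jac g n) (psi g n) \<subseteq> Ksub g n"
    unfolding ker_eq[OF pos] Prin_eq[OF pos] using ker_Ksub[OF pos] by (metis (no_types, lifting) imageE mem_Collect_eq subsetI)
qed

lemma psi_surj: assumes pos: "\<forall>a\<le>g. 1 \<le> n a"
  shows "psi g n ` carrier (Zg g) = carrier (Jac g n)"
proof
  show "psi g n ` carrier (Zg g) \<subseteq> carrier (Jac g n)"
    using hom_in_carrier[OF psi_hom[OF pos]] by blast
  show "carrier (Jac g n) \<subseteq> psi g n ` carrier (Zg g)"
  proof
    fix XX assume "XX \<in> carrier (Jac g n)"
    then obtain D where D: "D \<in> carrier (Div0 g n)" and XX: "XX = Prin g n #>\<^bsub>Div0 g n\<^esub> D"
      by (auto simp: Jac_def FactGroup_def RCOSETS_def)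
    obtain a where a: "a \<in> carrier (Zg g)" and r: "(\<lambda>u. D u - phi g n a u) \<in> range (pr g n)"
      using surj_core[OF pos D] by blast
    have "psi g n a = XX" unfolding psi_def XX by (rule coset_eq[OF pos phi_carrier[OF pos] r])
    then show "XX \<in> psi g n ` carrier (Zg g)" using a by blast
  qed
qed

lemma psi_coset: assumes pos: "\<forall>a\<le>g. 1 \<le> n a" and a: "a \<in> carrier (Zg g)"
  shows "the_elem (psi g n ` (Ksub g n #>\<^bsub>Zg g\<^esub> a)) = psi g n a"
proof -
  have "psi g n ` (Ksub g n #>\<^bsub>Zg g\<^esub> a) = {psi g n a}"
  proof
    show "psi g n ` (Ksub g n #>\<^bsub>Zg g\<^esub> a) \<subseteq> {psi g n a}"
    proof
      fix y assume "y \<in> psi g n ` (Ksub g n #>\<^bsub>Zg g\<^esub> a)"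
      then obtain k where k: "k \<in> Ksub g n" and y: "y = psi g n (k \<otimes>\<^bsub>Zg g\<^esub> a)"
        by (auto simp: r_coset_def)
      have kk: "k \<in> kernel (Zg g) (Jac g n) (psi g n)" using k Ksub_eq_kernel[OF pos] by simp
      then have kc: "k \<in> carrier (Zg g)" and k1: "psi g n k = \<one>\<^bsub>Jac g n\<^esub>" by (auto simp: kernel_def)
      have "y = psi g n k \<otimes>\<^bsub>Jac g n\<^esub> psi g n a" by (simp only: y hom_mult[OF psi_hom[OF pos] kc a])
      also have "\<dots> = psi g n a" unfolding k1
        by (rule monoid.l_one[OF group.is_monoid[OF Jac_group[OF pos]] hom_in_carrier[OF psi_hom[OF pos] a]])
      finally show "y \<in> {psi g n a}" by simp
    qed
    have "a \<in> Ksub g n #>\<^bsub>Zg g\<^esub> a"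
      by (rule group.rcos_self[OF Zg_group a Ksub_subgroup])
    then show "{psi g n a} \<subseteq> psi g n ` (Ksub g n #>\<^bsub>Zg g\<^esub> a)" by blast
  qed
  then show ?thesis by simp
qed

theorem mainTheorem13:
  fixes g :: nat and n :: "nat \<Rightarrow> nat"
  assumes "\<forall>\<alpha>\<le>g. 1 \<le> n \<alpha>"
  shows "\<exists>h. h \<in> iso (Zg g Mod Ksub g n) (Jac g n) \<and>
    (\<forall>a \<in> carrier (Zg g).
       h (Ksub g n #>\<^bsub>Zg g\<^esub> a) =
       Prin g n #>\<^bsub>Div0 g n\<^esub>
         (\<lambda>u. \<Sum>\<alpha>\<le>g. a \<alpha> * (indic (bvert n \<alpha> 1) u - indic (0, 0) u))) \<and>
    (\<forall>a \<in> carrier (Zg g). (\<forall>\<alpha>\<le>g. 0 \<le> a \<alpha> \<and> a \<alpha> \<le> int (n \<alpha>)) \<longrightarrow>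
       h (Ksub g n #>\<^bsub>Zg g\<^esub> a) =
       Prin g n #>\<^bsub>Div0 g n\<^esub>
         (\<lambda>u. \<Sum>\<alpha>\<le>g. indic (bvert n \<alpha> (nat (a \<alpha>))) u - indic (0, 0) u))"
proof -
  note pos = assms
  let ?h = "\<lambda>XX. the_elem (psi g n ` XX)"
  have iso: "?h \<in> iso (Zg g Mod Ksub g n) (Jac g n)"
    using group_hom.FactGroup_iso_set[OF psi_group_hom[OF pos] psi_surj[OF pos]]
    unfolding Ksub_eq_kernel[OF pos] .
  have c1: "?h (Ksub g n #>\<^bsub>Zg g\<^esub> a) = Prin g n #>\<^bsub>Div0 g n\<^esub>
         (\<lambda>u. \<Sum>\<alpha>\<le>g. a \<alpha> * (indic (bvert n \<alpha> 1) u - indic (0, 0) u))" if a: "a \<in> carrier (Zg g)" for a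
    using psi_coset[OF pos a] by (simp add: psi_def phi_def)
  have c2: "?h (Ksub g n #>\<^bsub>Zg g\<^esub> a) = Prin g n #>\<^bsub>Div0 g n\<^esub>
         (\<lambda>u. \<Sum>\<alpha>\<le>g. indic (bvert n \<alpha> (nat (a \<alpha>))) u - indic (0, 0) u)"
    if a: "a \<in> carrier (Zg g)" and b: "\<forall>\<alpha>\<le>g. 0 \<le> a \<alpha> \<and> a \<alpha> \<le> int (n \<alpha>)" for a
  proof -
    let ?I = "\<lambda>\<beta> x. indic (bvert n \<beta> 1) x - indic (0,0) x"
    have "(\<lambda>u. (\<Sum>\<alpha>\<le>g. indic (bvert n \<alpha> (nat (a \<alpha>))) u - indic (0, 0) u) - phi g n a u) =
        (\<lambda>u. \<Sum>\<alpha>\<le>g. indic (bvert n \<alpha> (nat (a \<alpha>))) u - indic (0, 0) u - int (nat (a \<alpha>)) * ?I \<alpha> u)"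
    proof
      fix u
      have "phi g n a u = (\<Sum>\<alpha>\<le>g. int (nat (a \<alpha>)) * ?I \<alpha> u)"
        unfolding phi_def by (rule sum.cong) (use b in simp_all)
      then show "(\<Sum>\<alpha>\<le>g. indic (bvert n \<alpha> (nat (a \<alpha>))) u - indic (0, 0) u) - phi g n a u =
          (\<Sum>\<alpha>\<le>g. indic (bvert n \<alpha> (nat (a \<alpha>))) u - indic (0, 0) u - int (nat (a \<alpha>)) * ?I \<alpha> u)"
        by (simp add: sum_subtractf)
    qed
    also have "\<dots> \<in> range (pr g n)"
    proof (rule range_pr_sum)
      fix \<alpha> assume "\<alpha> \<in> {..g}"
      then show "(\<lambda>u. indic (bvert n \<alpha> (nat (a \<alpha>))) u - indic (0, 0) u - int (nat (a \<alpha>)) * ?I \<alpha> u) \<in> range (pr g n)"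
        using b by (intro path_pr[OF pos]) auto
    qed simp
    finally have r: "(\<lambda>u. (\<Sum>\<alpha>\<le>g. indic (bvert n \<alpha> (nat (a \<alpha>))) u - indic (0, 0) u) - phi g n a u) \<in> range (pr g n)" .
    show ?thesis using psi_coset[OF pos a] coset_eq[OF pos phi_carrier[OF pos] r]
      by (simp add: psi_def)
  qed
  show ?thesis using iso c1 c2 by blast
qed

end
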